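(* Let $\mathbf{x}=(\mathbf{x}_1,\dots,\mathbf{x}_n)\in\mathbb{R}^{3n}$ be a ligand pose whose atom positions are not all collinear, and let $\boldsymbol{\theta}=(\theta_1,\dots,\theta_m)$ be fixed. For $t\in\mathbb{R}$ put $t\boldsymbol{\theta}=(t\theta_1,\dots,t\theta_m)$ and $\mathbf{x}(t):=A_{\mathrm{tor}}(t\boldsymbol{\theta},\mathbf{x})$, and assume $\mathbf{x}(0)=\mathbf{x}$ and that $t\mapsto\mathbf{x}(t)$ is differentiable at $t=0$ (with the aligning rotation and translation differentiable in $t$ at $t=0$). Then the linear and angular momentum of the motion vanish at $t=0$: $$\frac{d}{dt}\bar{\mathbf{x}}(t)\Big|_{t=0}=0\qquad\text{and}\qquad \sum_{i=1}^n(\mathbf{x}_i-\bar{\mathbf{x}})\times\frac{d}{dt}\mathbf{x}_i(t)\Big|_{t=0}=0,$$ where $\bar{\mathbf{x}}(t)=\frac1n\sum_i\mathbf{x}_i(t)$ and $\bar{\mathbf{x}}=\bar{\mathbf{x}}(0)$.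
   Context: A ligand pose is $\mathbf{x}\in\mathbb{R}^{3n}$, with $\mathbf{x}_i\in\mathbb{R}^3$ the position of atom $i$. $\mathrm{RMSD}(\mathbf{x},\mathbf{x}')=\big(\frac1n\sum_i\|\mathbf{x}_i-\mathbf{x}'_i\|^2\big)^{1/2}$. For $g\in SE(3)$ (proper rigid motion) $g\mathbf{x}'$ applies $g$ to every atom. Define $\mathrm{RMSDAlign}(\mathbf{x},\mathbf{x}')=\operatorname{argmin}_{\mathbf{x}^\dagger\in\{g\mathbf{x}'\mid g\in SE(3)\}}\mathrm{RMSD}(\mathbf{x},\mathbf{x}^\dagger)$. The ligand has $m$ rotatable bonds $(a_k,b_k)$; for each $k$ and angle $\theta$, $B_{k,\theta}:\mathbb{R}^{3n}\to\mathbb{R}^{3n}$ is a torsion update by $\theta$ around bond $k$ (rotation of the atoms on one side of the bond about the bond axis by $\theta$), with $B_{k,0}$ the identity and $B_{k,\theta}$ smooth in $\theta$. The torsion operation is $A_{\mathrm{tor}}(\boldsymbol{\theta},\mathbf{x})=\mathrm{RMSDAlign}\big(\mathbf{x},(B_{1,\theta_1}\circ\cdots\circ B_{m,\theta_m})(\mathbf{x})\big)$ for $\boldsymbol{\theta}\in SO(2)^m$. *)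

theory Defs
  imports "HOL-Analysis.Analysis"
begin

text \<open>A pose of a ligand with atoms indexed by the finite type 'n (so n = CARD('n))
  is a map from atoms to positions in R^3.\<close>

type_synonym 'n pose = "'n \<Rightarrow> real^3"

definition RMSD :: "('n::finite) pose \<Rightarrow> 'n pose \<Rightarrow> real" where
  "RMSD x x' = sqrt ((1 / real CARD('n)) * (\<Sum>i\<in>UNIV. (norm (x i - x' i))\<^sup>2))"

definition rigid_apply :: "real^3^3 \<Rightarrow> real^3 \<Rightarrow> ('n::finite) pose \<Rightarrow> 'n pose" where
  "rigid_apply R p x = (\<lambda>i. R *v x i + p)"

definition SE3_orbit :: "('n::finite) pose \<Rightarrow> 'n pose set" where
  "SE3_orbit x' = {rigid_apply R p x' | R p. rotation_matrix R}"

definition RMSDAlign :: "('n::finite) pose \<Rightarrow> 'n pose \<Rightarrow> 'n pose" where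
  "RMSDAlign x x' = (SOME y. y \<in> SE3_orbit x' \<and> (\<forall>z\<in>SE3_orbit x'. RMSD x y \<le> RMSD x z))"

text \<open>Rotation of the point v by angle th about the line through c with direction d
  (Rodrigues' formula, with unit axis u = d / |d|).\<close>
definition axis_rot :: "real^3 \<Rightarrow> real^3 \<Rightarrow> real \<Rightarrow> real^3 \<Rightarrow> real^3" where
  "axis_rot c d th v =
     (let u = (1 / norm d) *\<^sub>R d; w = v - c in
      c + (cos th *\<^sub>R w + sin th *\<^sub>R (cross3 u w) + ((1 - cos th) * (u \<bullet> w)) *\<^sub>R u))"

text \<open>A rotatable bond is given as (a, b, S): bond atoms a, b and the set S of atoms on
  the side that is rotated. B_{k,th}: rotate the atoms of S about the bond axis x_a -> x_b.\<close>
definition torsion_update :: "('n \<times> 'n \<times> 'n set) \<Rightarrow> real \<Rightarrow> ('n::finite) pose \<Rightarrow> 'n pose" where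
  "torsion_update bd th x =
     (case bd of (a, b, S) \<Rightarrow>
        (\<lambda>i. if i \<in> S then axis_rot (x b) (x b - x a) th (x i) else x i))"

text \<open>B_{1,th_1} o ... o B_{m,th_m}, bonds given as a list of length m, angles indexed 0..m-1.\<close>
definition torsion_comp :: "('n \<times> 'n \<times> 'n set) list \<Rightarrow> (nat \<Rightarrow> real) \<Rightarrow> ('n::finite) pose \<Rightarrow> 'n pose" where
  "torsion_comp bonds th =
     foldr (\<lambda>k f. torsion_update (bonds ! k) (th k) \<circ> f) [0..<length bonds] id"

definition A_tor :: "('n \<times> 'n \<times> 'n set) list \<Rightarrow> (nat \<Rightarrow> real) \<Rightarrow> ('n::finite) pose \<Rightarrow> 'n pose" where
  "A_tor bonds th x = RMSDAlign x (torsion_comp bonds th x)"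

definition centroid :: "('n::finite) pose \<Rightarrow> real^3" where
  "centroid x = (1 / real CARD('n)) *\<^sub>R (\<Sum>i\<in>UNIV. x i)"

end

theory Submission imports Defs begin

definition SS :: "('n::finite) pose \<Rightarrow> 'n pose \<Rightarrow> real" where
  "SS x w = (\<Sum>i\<in>UNIV. (norm (x i - w i))\<^sup>2)"

lemma RMSD_mono: "SS x z \<le> SS x w \<Longrightarrow> RMSD x z \<le> RMSD x w"
  unfolding RMSD_def SS_def
  by (intro real_sqrt_le_mono mult_left_mono) auto

lemma trans_id:
  fixes a :: "'n::finite \<Rightarrow> real^3"
  defines "m \<equiv> (1 / real CARD('n)) *\<^sub>R (\<Sum>i\<in>UNIV. a i)"
  shows "(\<Sum>i\<in>UNIV. (norm (a i - q))\<^sup>2) =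
         (\<Sum>i\<in>UNIV. (norm (a i - m))\<^sup>2) + real CARD('n) * (norm (m - q))\<^sup>2"
proof -
  have N: "real CARD('n) > 0" by simp
  have c: "(\<Sum>i::'n\<in>UNIV. m) = real CARD('n) *\<^sub>R m" by (simp add: scaleR_conv_of_real)
  have s0: "(\<Sum>i\<in>UNIV. a i - m) = 0"
    using N unfolding sum_subtractf c by (simp add: m_def)
  have e: "\<And>i. (norm (a i - q))\<^sup>2 = (norm (a i - m))\<^sup>2 + 2 * ((a i - m) \<bullet> (m - q)) + (norm (m - q))\<^sup>2"
  proof -
    fix i
    have "a i - q = (a i - m) + (m - q)" by simp
    then show "(norm (a i - q))\<^sup>2 = (norm (a i - m))\<^sup>2 + 2 * ((a i - m) \<bullet> (m - q)) + (norm (m - q))\<^sup>2"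
      by (simp add: dot_norm[of "a i - m" "m - q"] field_simps)
  qed
  have "(\<Sum>i\<in>UNIV. (a i - m) \<bullet> (m - q)) = (\<Sum>i\<in>UNIV. a i - m) \<bullet> (m - q)"
    by (simp add: inner_sum_left)
  also have "\<dots> = 0" using s0 by simp
  finally have z: "(\<Sum>i\<in>UNIV. (a i - m) \<bullet> (m - q)) = 0" .
  show ?thesis
    unfolding e sum.distrib using z by (simp add: sum_distrib_left[symmetric])
qed

lemma cont_mv: "continuous_on S (\<lambda>Q::real^'m^'k. Q *v v)"
  unfolding matrix_vector_mult_def
  by (intro continuous_intros)

lemma norm_rot: "rotation_matrix (Q::real^3^3) \<Longrightarrow> norm Q ^ 2 = 3"
proof -
  assume "rotation_matrix Q"
  then have "Q ** transpose Q = mat 1" by (simp add: rotation_matrix_def orthogonal_matrix_def)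
  then have "\<And>i. Q$i \<bullet> Q$i = 1"
    by (auto simp: vec_eq_iff matrix_matrix_mult_def transpose_def mat_def inner_vec_def)
  then show ?thesis by (simp add: power2_norm_eq_inner inner_vec_def[of Q Q])
qed

lemma closed_rot: "closed {Q::real^3^3. rotation_matrix Q}"
proof -
  have "{Q::real^3^3. rotation_matrix Q} =
     {Q. \<forall>i j. (\<Sum>k\<in>UNIV. Q$k$i * Q$k$j) = (if i = j then 1 else 0)} \<inter>
     {Q. \<forall>i j. (\<Sum>k\<in>UNIV. Q$i$k * Q$j$k) = (if i = j then 1 else 0)} \<inter> {Q. det Q = 1}"
    unfolding rotation_matrix_def orthogonal_matrix_def vec_eq_iff matrix_matrix_mult_def
        transpose_def mat_def by auto
  moreover have "closed \<dots>"
    unfolding det_3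
    apply (intro closed_Int closed_Collect_all closed_Collect_eq)
    apply (intro continuous_intros)+
    done
  ultimately show ?thesis by simp
qed

lemma compact_rot: "compact {Q::real^3^3. rotation_matrix Q}"
proof -
  have "bounded {Q::real^3^3. rotation_matrix Q}"
    unfolding bounded_iff
  proof (intro exI[of _ 2] allI ballI)
    fix Q :: "real^3^3" assume "Q \<in> {Q. rotation_matrix Q}"
    then have "norm Q ^ 2 \<le> 2 ^ 2" using norm_rot by simp
    then show "norm Q \<le> 2"
      by (rule power2_le_imp_le) simp
  qed
  then show ?thesis using closed_rot compact_eq_bounded_closed by blast
qed

lemma rot_id: "rotation_matrix (mat 1 :: real^3^3)"
  by (simp add: rotation_matrix_def orthogonal_matrix_id)

lemma rot_mul: "rotation_matrix (A::real^3^3) \<Longrightarrow> rotation_matrix B \<Longrightarrow> rotation_matrix (A ** B)"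
  by (simp add: rotation_matrix_def orthogonal_matrix_mul det_mul)

lemma exists_min:
  fixes x y :: "('n::finite) pose"
  shows "\<exists>z. z \<in> SE3_orbit y \<and> (\<forall>w\<in>SE3_orbit y. RMSD x z \<le> RMSD x w)"
proof -
  define a where "a Q i = x i - Q *v y i" for Q :: "real^3^3" and i
  define mm where "mm Q = (1 / real CARD('n)) *\<^sub>R (\<Sum>i\<in>UNIV. a Q i)" for Q
  define G where "G Q = (\<Sum>i\<in>UNIV. (norm (a Q i - mm Q))\<^sup>2)" for Q
  have "continuous_on {Q. rotation_matrix Q} G"
    unfolding G_def mm_def a_def by (intro continuous_intros cont_mv)
  then obtain Q0 where Q0: "rotation_matrix Q0" "\<And>Q. rotation_matrix Q \<Longrightarrow> G Q0 \<le> G Q"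
    using continuous_attains_inf[OF compact_rot, of G] rot_id by blast
  define z where "z = rigid_apply Q0 (mm Q0) y"
  have SSeq: "SS x (rigid_apply Q p y) = (\<Sum>i\<in>UNIV. (norm (a Q i - p))\<^sup>2)" for Q p
    unfolding SS_def rigid_apply_def a_def by (simp add: algebra_simps)
  have "z \<in> SE3_orbit y" using Q0 unfolding z_def SE3_orbit_def by blast
  moreover have "RMSD x z \<le> RMSD x w" if wo: "w \<in> SE3_orbit y" for w
  proof -
    obtain Q p where w: "w = rigid_apply Q p y" "rotation_matrix Q"
      using wo unfolding SE3_orbit_def by blast
    have "SS x z = G Q0" unfolding z_def SSeq G_def ..
    also have "\<dots> \<le> G Q" using Q0 w by blast
    also have "\<dots> \<le> SS x w"
      unfolding w SSeq G_def mm_def trans_id[of "a Q" p] by simp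
    finally show ?thesis by (rule RMSD_mono)
  qed
  ultimately show ?thesis by blast
qed
lemma plane_lemma:
  fixes A B P Q :: "'n::finite \<Rightarrow> real"
  assumes ineq: "\<And>t. (\<Sum>i\<in>UNIV. (A i - P i)\<^sup>2 + (B i - Q i)\<^sup>2) \<le>
     (\<Sum>i\<in>UNIV. (A i - (cos t * P i - sin t * Q i))\<^sup>2 + (B i - (sin t * P i + cos t * Q i))\<^sup>2)"
  shows "(\<Sum>i\<in>UNIV. A i * Q i - B i * P i) = 0"
proof -
  define F where "F t = (\<Sum>i\<in>UNIV. (A i - (cos t * P i - sin t * Q i))\<^sup>2 + (B i - (sin t * P i + cos t * Q i))\<^sup>2)" for t
  have D: "DERIV F 0 :> (\<Sum>i\<in>UNIV. 2 * (A i - P i) * Q i + 2 * (B i - Q i) * (- P i))"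
    unfolding F_def
    by (auto intro!: derivative_eq_intros sum.cong simp: algebra_simps)
  have "(\<Sum>i\<in>UNIV. 2 * (A i - P i) * Q i + 2 * (B i - Q i) * (- P i)) = 0"
    by (rule DERIV_local_min[OF D, of 1]) (use ineq in \<open>auto simp: F_def\<close>)
  then have "2 * (\<Sum>i\<in>UNIV. A i * Q i - B i * P i) = 0"
    by (simp add: sum_distrib_left algebra_simps sum_subtractf sum.distrib)
  then show ?thesis by simp
qed

definition rz :: "real \<Rightarrow> real^3^3" where
  "rz t = vector [vector [cos t, - sin t, 0], vector [sin t, cos t, 0], vector [0, 0, 1]]"
definition rx :: "real \<Rightarrow> real^3^3" where
  "rx t = vector [vector [1, 0, 0], vector [0, cos t, - sin t], vector [0, sin t, cos t]]"
definition ry :: "real \<Rightarrow> real^3^3" where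
  "ry t = vector [vector [cos t, 0, sin t], vector [0, 1, 0], vector [- sin t, 0, cos t]]"

lemmas mat_simps = rotation_matrix_def orthogonal_matrix_def det_3 vec_eq_iff
   matrix_matrix_mult_def transpose_def mat_def forall_3 sum_3

lemma rot_rz: "rotation_matrix (rz t)"
  by (simp add: mat_simps rz_def flip: power2_eq_square)
lemma rot_rx: "rotation_matrix (rx t)"
  by (simp add: mat_simps rx_def flip: power2_eq_square)
lemma rot_ry: "rotation_matrix (ry t)"
  by (simp add: mat_simps ry_def flip: power2_eq_square)

lemma rz_mv: "rz t *v v = vector [cos t * v$1 - sin t * v$2, sin t * v$1 + cos t * v$2, v$3]"
  by (simp add: rz_def matrix_vector_mult_def sum_3 vec_eq_iff forall_3)
lemma rx_mv: "rx t *v v = vector [v$1, cos t * v$2 - sin t * v$3, sin t * v$2 + cos t * v$3]"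
  by (simp add: rx_def matrix_vector_mult_def sum_3 vec_eq_iff forall_3)
lemma ry_mv: "ry t *v v = vector [sin t * v$3 + cos t * v$1, v$2, cos t * v$3 - sin t * v$1]"
  by (simp add: ry_def matrix_vector_mult_def sum_3 vec_eq_iff forall_3 algebra_simps)

lemma plane_lemma2:
  fixes A B P Q C :: "'n::finite \<Rightarrow> real"
  assumes ineq: "\<And>t. (\<Sum>i\<in>UNIV. (A i - P i)\<^sup>2 + (B i - Q i)\<^sup>2 + C i) \<le>
     (\<Sum>i\<in>UNIV. (A i - (cos t * P i - sin t * Q i))\<^sup>2 + (B i - (sin t * P i + cos t * Q i))\<^sup>2 + C i)"
  shows "(\<Sum>i\<in>UNIV. A i * Q i - B i * P i) = 0"
  using ineq by (intro plane_lemma) (simp add: sum.distrib)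

lemma norm3: "(norm (v::real^3))\<^sup>2 = (v$1)\<^sup>2 + (v$2)\<^sup>2 + (v$3)\<^sup>2"
  unfolding power2_norm_eq_inner inner_vec_def sum_3 by (simp add: power2_eq_square)

lemma RMSD_mono_rev: "RMSD x z \<le> RMSD x w \<Longrightarrow> SS x z \<le> SS x w"
proof -
  assume "RMSD x z \<le> RMSD x w"
  then have "(1 / real CARD('a)) * SS x z \<le> (1 / real CARD('a)) * SS x w"
    unfolding RMSD_def SS_def by (simp only: real_sqrt_le_iff)
  then show ?thesis by (rule mult_left_le_imp_le) simp
qed

lemma orbit_closed:
  assumes "z \<in> SE3_orbit y" "rotation_matrix Q"
  shows "rigid_apply Q q z \<in> SE3_orbit y"
proof -
  obtain R p where z: "z = rigid_apply R p y" "rotation_matrix R"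
    using assms(1) unfolding SE3_orbit_def by blast
  have "rigid_apply Q q z = rigid_apply (Q ** R) (Q *v p + q) y"
    unfolding z rigid_apply_def
    by (simp add: fun_eq_iff matrix_vector_mul_assoc matrix_vector_right_distrib add_ac)
  then show ?thesis using rot_mul[OF assms(2) z(2)] unfolding SE3_orbit_def by blast
qed

lemma opt_conseq:
  fixes x y z :: "('n::finite) pose"
  assumes zo: "z \<in> SE3_orbit y" and zm: "\<forall>w\<in>SE3_orbit y. RMSD x z \<le> RMSD x w"
  shows "(\<Sum>i\<in>UNIV. x i - z i) = 0" "(\<Sum>i\<in>UNIV. cross3 (z i) (x i)) = 0"
proof -
  have key: "SS x z \<le> SS x (rigid_apply Q q z)" if "rotation_matrix Q" for Q q
    using zm orbit_closed[OF zo that] RMSD_mono_rev by blast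
  define a where "a i = x i - z i" for i
  define m where "m = (1 / real CARD('n)) *\<^sub>R (\<Sum>i\<in>UNIV. a i)"
  have "SS x z \<le> SS x (rigid_apply (mat 1) m z)" using key rot_id by blast
  moreover have "SS x z = (\<Sum>i\<in>UNIV. (norm (a i - 0))\<^sup>2)" unfolding SS_def a_def by simp
  moreover have "SS x (rigid_apply (mat 1) m z) = (\<Sum>i\<in>UNIV. (norm (a i - m))\<^sup>2)"
    unfolding SS_def a_def rigid_apply_def by (simp add: algebra_simps)
  ultimately have "(\<Sum>i\<in>UNIV. (norm (a i - 0))\<^sup>2) \<le> (\<Sum>i\<in>UNIV. (norm (a i - m))\<^sup>2)" by simp
  then have "real CARD('n) * (norm (m - 0))\<^sup>2 \<le> 0"
    unfolding trans_id[of a 0] m_def by simp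
  then have "m = 0"
    by (smt (verit) of_nat_0_less_iff zero_less_card_finite norm_eq_zero zero_less_power2
        mult_pos_pos diff_zero)
  then show "(\<Sum>i\<in>UNIV. x i - z i) = 0" unfolding m_def a_def by simp
  have e: "SS x w = (\<Sum>i\<in>UNIV. (x i$1 - w i$1)\<^sup>2 + (x i$2 - w i$2)\<^sup>2 + (x i$3 - w i$3)\<^sup>2)" for w
    unfolding SS_def by (simp add: norm3)
  have k0: "SS x z \<le> SS x (\<lambda>i. Q *v z i)" if "rotation_matrix Q" for Q
    using key[OF that, of 0] unfolding rigid_apply_def by simp
  have c3: "(\<Sum>i\<in>UNIV. x i$1 * z i$2 - x i$2 * z i$1) = 0"
  proof (rule plane_lemma2[where C = "\<lambda>i. (x i$3 - z i$3)\<^sup>2"])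
    fix t show "(\<Sum>i\<in>UNIV. (x i$1 - z i$1)\<^sup>2 + (x i$2 - z i$2)\<^sup>2 + (x i$3 - z i$3)\<^sup>2) \<le>
      (\<Sum>i\<in>UNIV. (x i$1 - (cos t * z i$1 - sin t * z i$2))\<^sup>2 + (x i$2 - (sin t * z i$1 + cos t * z i$2))\<^sup>2 + (x i$3 - z i$3)\<^sup>2)"
      using k0[OF rot_rz[of t]] unfolding e by (simp add: rz_mv)
  qed
  have c1: "(\<Sum>i\<in>UNIV. x i$2 * z i$3 - x i$3 * z i$2) = 0"
  proof (rule plane_lemma2[where C = "\<lambda>i. (x i$1 - z i$1)\<^sup>2"])
    fix t show "(\<Sum>i\<in>UNIV. (x i$2 - z i$2)\<^sup>2 + (x i$3 - z i$3)\<^sup>2 + (x i$1 - z i$1)\<^sup>2) \<le>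
      (\<Sum>i\<in>UNIV. (x i$2 - (cos t * z i$2 - sin t * z i$3))\<^sup>2 + (x i$3 - (sin t * z i$2 + cos t * z i$3))\<^sup>2 + (x i$1 - z i$1)\<^sup>2)"
      using k0[OF rot_rx[of t]] unfolding e by (simp add: rx_mv add_ac)
  qed
  have c2: "(\<Sum>i\<in>UNIV. x i$3 * z i$1 - x i$1 * z i$3) = 0"
  proof (rule plane_lemma2[where C = "\<lambda>i. (x i$2 - z i$2)\<^sup>2"])
    fix t show "(\<Sum>i\<in>UNIV. (x i$3 - z i$3)\<^sup>2 + (x i$1 - z i$1)\<^sup>2 + (x i$2 - z i$2)\<^sup>2) \<le>
      (\<Sum>i\<in>UNIV. (x i$3 - (cos t * z i$3 - sin t * z i$1))\<^sup>2 + (x i$1 - (sin t * z i$3 + cos t * z i$1))\<^sup>2 + (x i$2 - z i$2)\<^sup>2)"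
      using k0[OF rot_ry[of t]] unfolding e by (simp add: ry_mv add_ac)
  qed
  have n1: "(\<Sum>i\<in>UNIV. z i$2 * x i$3 - z i$3 * x i$2) = - (\<Sum>i\<in>UNIV. x i$2 * z i$3 - x i$3 * z i$2)"
    by (simp add: sum_negf[symmetric] algebra_simps)
  have n2: "(\<Sum>i\<in>UNIV. z i$3 * x i$1 - z i$1 * x i$3) = - (\<Sum>i\<in>UNIV. x i$3 * z i$1 - x i$1 * z i$3)"
    by (simp add: sum_negf[symmetric] algebra_simps)
  have n3: "(\<Sum>i\<in>UNIV. z i$1 * x i$2 - z i$2 * x i$1) = - (\<Sum>i\<in>UNIV. x i$1 * z i$2 - x i$2 * z i$1)"
    by (simp add: sum_negf[symmetric] algebra_simps)
  show "(\<Sum>i\<in>UNIV. cross3 (z i) (x i)) = 0"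
    unfolding vec_eq_iff forall_3 using n1 n2 n3 c1 c2 c3 by (simp add: cross3_def)
qed

theorem proposition1:
  fixes bonds :: "('n::finite \<times> 'n \<times> 'n set) list"
    and \<theta> :: "nat \<Rightarrow> real"
    and x :: "'n pose"
    and R :: "real \<Rightarrow> real^3^3" and p :: "real \<Rightarrow> real^3"
  defines "xt \<equiv> (\<lambda>t. A_tor bonds (\<lambda>k. t * \<theta> k) x)"
  assumes noncol: "\<not> collinear (range x)"
    and x0: "xt 0 = x"
    and diff: "\<And>i. (\<lambda>t. xt t i) differentiable (at 0)"
    and align: "\<And>t. rotation_matrix (R t) \<and>
                     xt t = rigid_apply (R t) (p t) (torsion_comp bonds (\<lambda>k. t * \<theta> k) x)"
    and Rdiff: "R differentiable (at 0)"
    and pdiff: "p differentiable (at 0)"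
  shows "((\<lambda>t. centroid (xt t)) has_vector_derivative 0) (at 0)
       \<and> (\<Sum>i\<in>UNIV. cross3 (x i - centroid x) (vector_derivative (\<lambda>t. xt t i) (at 0))) = 0"
proof -
  have P: "xt t \<in> SE3_orbit (torsion_comp bonds (\<lambda>k. t * \<theta> k) x) \<and>
      (\<forall>w\<in>SE3_orbit (torsion_comp bonds (\<lambda>k. t * \<theta> k) x). RMSD x (xt t) \<le> RMSD x w)" for t
    unfolding xt_def A_tor_def RMSDAlign_def by (rule someI_ex[OF exists_min])
  have S1: "(\<Sum>i\<in>UNIV. xt t i) = (\<Sum>i\<in>UNIV. x i)" for t
    using opt_conseq(1)[OF conjunct1[OF P] conjunct2[OF P]] by (simp add: sum_subtractf)
  have S2: "(\<Sum>i\<in>UNIV. cross3 (xt t i) (x i)) = 0" for t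
    using opt_conseq(2)[OF conjunct1[OF P] conjunct2[OF P]] .
  have cc: "(\<lambda>t. centroid (xt t)) = (\<lambda>t. centroid x)"
    unfolding centroid_def S1 ..
  define D where "D i = vector_derivative (\<lambda>t. xt t i) (at 0)" for i
  have hd: "((\<lambda>t. xt t i) has_vector_derivative D i) (at 0)" for i
    using diff[of i] unfolding D_def vector_derivative_works .
  have "((\<lambda>t. \<Sum>i\<in>UNIV. xt t i) has_vector_derivative (\<Sum>i\<in>UNIV. D i)) (at 0)"
    by (intro has_vector_derivative_sum hd)
  moreover have "((\<lambda>t. \<Sum>i\<in>UNIV. xt t i) has_vector_derivative 0) (at 0)"
    unfolding S1 by simp
  ultimately have sD: "(\<Sum>i\<in>UNIV. D i) = 0" by (rule vector_derivative_unique_at)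
  have bl: "bounded_linear (\<lambda>v. cross3 v c)" for c :: "real^3"
    using bilinear_cross bilinear_conv_bounded_bilinear bounded_bilinear.bounded_linear_left by blast
  have "((\<lambda>t. \<Sum>i\<in>UNIV. cross3 (xt t i) (x i)) has_vector_derivative (\<Sum>i\<in>UNIV. cross3 (D i) (x i))) (at 0)"
    by (intro has_vector_derivative_sum bounded_linear.has_vector_derivative[OF bl] hd)
  moreover have "((\<lambda>t. \<Sum>i\<in>UNIV. cross3 (xt t i) (x i)) has_vector_derivative 0) (at 0)"
    unfolding S2 by simp
  ultimately have sC: "(\<Sum>i\<in>UNIV. cross3 (D i) (x i)) = 0" by (rule vector_derivative_unique_at)
  have "(\<Sum>i\<in>UNIV. cross3 (x i - centroid x) (D i))
      = (\<Sum>i\<in>UNIV. cross3 (x i) (D i)) - cross3 (centroid x) (\<Sum>i\<in>UNIV. D i)"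
  proof -
    have lin: "linear (\<lambda>y. cross3 (centroid x) y)" using bilinear_cross by (simp add: bilinear_def)
    have "(\<Sum>i\<in>UNIV. cross3 (centroid x) (D i)) = cross3 (centroid x) (\<Sum>i\<in>UNIV. D i)"
      by (simp add: real_vector.linear_sum[OF lin])
    then show ?thesis
      by (simp add: bilinear_lsub[OF bilinear_cross] sum_subtractf)
  qed
  also have "\<dots> = - (\<Sum>i\<in>UNIV. cross3 (D i) (x i))"
  proof -
    have "cross3 (x i) (D i) = - cross3 (D i) (x i)" for i by (rule cross_skew)
    then show ?thesis using sD by (simp add: sum_negf bilinear_rzero[OF bilinear_cross])
  qed
  also have "\<dots> = 0" using sC by simp
  finally have "(\<Sum>i\<in>UNIV. cross3 (x i - centroid x) (D i)) = 0" .
  then show ?thesis unfolding cc D_def by simp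
qed

end
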